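(* Let $G$ be a finite graph and $k$ a nonnegative integer. If the edge-arboricity of $G$ satisfies $a(G)\le k$, then $G$ is adaptably $(k+1)$-choosable, and hence $G$ is $(k+1,1)$-choosable.
   Context: The edge-arboricity $a(G)$ is the minimum number of forests into which the edge set of $G$ can be partitioned. Given a (possibly improper) edge coloring $F$ of $G$ with integers, a vertex coloring $c$ of $G$ is adapted to $F$ if no edge $uv$ satisfies $c(u)=c(v)=F(uv)$. For a list assignment $L$ (a set $L(v)$ of colors for each vertex $v$), an $L$-coloring adapted to $F$ is a coloring adapted to $F$ with $c(v)\in L(v)$ for all $v$. $G$ is adaptably $k$-choosable if for every edge coloring $F$ and every list assignment $L$ with $|L(v)|\ge k$ for all $v$, there is an $L$-coloring of $G$ adapted to $F$. A $(k,d)$-list assignment assigns to each vertex $v$ a list $L(v)$ of at least $k$ colors such that $|L(x)\cap L(y)|\le d$ whenever $x,y$ are adjacent; $G$ is $(k,d)$-choosable if for every $(k,d)$-list assignment $L$ there is a proper vertex coloring $\varphi$ with $\varphi(v)\in L(v)$ for all $v$. *)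

theory Defs
  imports Main
begin

definition finite_graph :: "'a set \<Rightarrow> 'a set set \<Rightarrow> bool" where
  "finite_graph V E \<longleftrightarrow> finite V \<and> (\<forall>e\<in>E. e \<subseteq> V \<and> card e = 2)"

definition is_cycle_in :: "'a set set \<Rightarrow> 'a list \<Rightarrow> bool" where
  "is_cycle_in F vs \<longleftrightarrow> length vs \<ge> 3 \<and> distinct vs \<and>
     (\<forall>i < length vs. {vs ! i, vs ! ((i + 1) mod length vs)} \<in> F)"

definition is_forest :: "'a set set \<Rightarrow> bool" where
  "is_forest F \<longleftrightarrow> \<not> (\<exists>vs. is_cycle_in F vs)"

definition forest_partitionable :: "'a set set \<Rightarrow> nat \<Rightarrow> bool" where
  "forest_partitionable E k \<longleftrightarrow>
     (\<exists>f :: 'a set \<Rightarrow> nat. (\<forall>e\<in>E. f e < k) \<and> (\<forall>i<k. is_forest {e\<in>E. f e = i}))"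

definition arboricity :: "'a set set \<Rightarrow> nat" where
  "arboricity E = (LEAST k. forest_partitionable E k)"

definition at_least :: "nat \<Rightarrow> 'c set \<Rightarrow> bool" where
  "at_least k A \<longleftrightarrow> infinite A \<or> k \<le> card A"

definition adapted :: "'a set set \<Rightarrow> ('a set \<Rightarrow> int) \<Rightarrow> ('a \<Rightarrow> int) \<Rightarrow> bool" where
  "adapted E F c \<longleftrightarrow> (\<forall>u v. {u, v} \<in> E \<longrightarrow> \<not> (c u = c v \<and> c v = F {u, v}))"

definition adaptably_choosable :: "'a set \<Rightarrow> 'a set set \<Rightarrow> nat \<Rightarrow> bool" where
  "adaptably_choosable V E k \<longleftrightarrow>
     (\<forall>(F :: 'a set \<Rightarrow> int) (L :: 'a \<Rightarrow> int set). (\<forall>v\<in>V. at_least k (L v)) \<longrightarrow>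
        (\<exists>c. (\<forall>v\<in>V. c v \<in> L v) \<and> adapted E F c))"

definition kd_list_assignment :: "'a set \<Rightarrow> 'a set set \<Rightarrow> nat \<Rightarrow> nat \<Rightarrow> ('a \<Rightarrow> int set) \<Rightarrow> bool" where
  "kd_list_assignment V E k d L \<longleftrightarrow>
     (\<forall>v\<in>V. at_least k (L v)) \<and>
     (\<forall>x y. {x, y} \<in> E \<longrightarrow> finite (L x \<inter> L y) \<and> card (L x \<inter> L y) \<le> d)"

definition kd_choosable :: "'a set \<Rightarrow> 'a set set \<Rightarrow> nat \<Rightarrow> nat \<Rightarrow> bool" where
  "kd_choosable V E k d \<longleftrightarrow>
     (\<forall>L. kd_list_assignment V E k d L \<longrightarrow>
        (\<exists>\<phi>. (\<forall>v\<in>V. \<phi> v \<in> L v) \<and> (\<forall>u v. {u, v} \<in> E \<longrightarrow> \<phi> u \<noteq> \<phi> v)))"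

end

theory Submission
  imports Defs
begin

lemma forest_mono: "is_forest F \<Longrightarrow> F' \<subseteq> F \<Longrightarrow> is_forest F'"
  unfolding is_forest_def is_cycle_in_def by blast

lemma forest_single: "S \<subseteq> {e} \<Longrightarrow> is_forest S"
proof -
  assume S: "S \<subseteq> {e}"
  { fix vs assume c: "is_cycle_in S vs"
    then have l: "length vs \<ge> 3" and d: "distinct vs"
      and ed: "\<forall>i < length vs. {vs ! i, vs ! ((i + 1) mod length vs)} \<in> S"
      unfolding is_cycle_in_def by auto
    have m0: "(0 + 1) mod length vs = 1" and m1: "(1 + 1) mod length vs = 2" using l by auto
    have "(0::nat) < length vs" "(1::nat) < length vs" using l by auto
    note ed0 = ed[rule_format, OF this(1)] and ed1 = ed[rule_format, OF this(2)]
    have "{vs!0, vs!((0 + 1) mod length vs)} \<in> S" by (rule ed0)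
    then have e0: "{vs!0, vs!1} \<in> S" unfolding m0 .
    have "{vs!1, vs!((1 + 1) mod length vs)} \<in> S" by (rule ed1)
    then have e1: "{vs!1, vs!2} \<in> S" unfolding m1 .
    have eq: "{vs!0, vs!1} = {vs!1, vs!2}" using S e0 e1 by blast
    have len: "0 < length vs" "1 < length vs" "2 < length vs" using l by auto
    have "vs!0 \<noteq> vs!1" using nth_eq_iff_index_eq[OF d len(1) len(2)] by simp
    moreover have "vs!0 \<noteq> vs!2" using nth_eq_iff_index_eq[OF d len(1) len(3)] by simp
    ultimately have False using eq by blast
  }
  then show ?thesis unfolding is_forest_def by blast
qed

definition is_path :: "'a set set \<Rightarrow> 'a list \<Rightarrow> bool" where
  "is_path F vs \<longleftrightarrow> distinct vs \<and> length vs \<ge> 2 \<and> (\<forall>i. Suc i < length vs \<longrightarrow> {vs!i, vs!Suc i} \<in> F)"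

lemma path_extend:
  assumes "is_path F vs" "w \<notin> set vs" "{w, vs!0} \<in> F"
  shows "is_path F (w # vs)"
  unfolding is_path_def
proof (intro conjI allI impI)
  show "distinct (w # vs)" using assms unfolding is_path_def by auto
  show "2 \<le> length (w # vs)" using assms unfolding is_path_def by auto
  fix i assume "Suc i < length (w # vs)"
  then show "{(w # vs) ! i, (w # vs) ! Suc i} \<in> F"
    using assms unfolding is_path_def by (cases i) auto
qed

lemma path_cycle:
  assumes "is_path F vs" "2 \<le> j" "j < length vs" "{vs!j, vs!0} \<in> F"
  shows "is_cycle_in F (take (Suc j) vs)"
  unfolding is_cycle_in_def
proof (intro conjI allI impI)
  show "3 \<le> length (take (Suc j) vs)" using assms by auto
  show "distinct (take (Suc j) vs)" using assms unfolding is_path_def by auto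
  fix i assume i: "i < length (take (Suc j) vs)"
  then have ij: "i \<le> j" using assms by auto
  show "{take (Suc j) vs ! i, take (Suc j) vs ! ((i + 1) mod length (take (Suc j) vs))} \<in> F"
  proof (cases "i = j")
    case True
    then show ?thesis using assms by auto
  next
    case False
    then have "i < j" using ij by auto
    then have "(i + 1) mod Suc j = Suc i" by auto
    then show ?thesis using assms \<open>i < j\<close> unfolding is_path_def by auto
  qed
qed

lemma leaf_exists:
  assumes fin: "finite F" and two: "\<forall>e\<in>F. card e = 2" and fo: "is_forest F" and ne: "F \<noteq> {}"
  shows "\<exists>a b. {a, b} \<in> F \<and> (\<forall>e\<in>F. a \<in> e \<longrightarrow> e = {a, b})"
proof -
  let ?U = "\<Union>F"
  have finU: "finite ?U" using fin two by (metis Sup_upper card.infinite finite_Union zero_neq_numeral)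
  define P where "P = {vs. is_path F vs}"
  have PU: "set vs \<subseteq> ?U" if "vs \<in> P" for vs
  proof
    fix x assume "x \<in> set vs"
    then obtain i where i: "i < length vs" "vs ! i = x" by (auto simp: in_set_conv_nth)
    have p: "is_path F vs" using that P_def by auto
    show "x \<in> ?U"
    proof (cases "Suc i < length vs")
      case True
      then show ?thesis using p i unfolding is_path_def by blast
    next
      case False
      then have "i = Suc (i - 1)" using p i unfolding is_path_def by auto
      then have "{vs!(i-1), vs!i} \<in> F" using p i unfolding is_path_def
        by (metis Suc_lessD less_Suc_eq)
      then show ?thesis using i by blast
    qed
  qed
  have PL: "length vs \<le> card ?U" if "vs \<in> P" for vs
  proof -
    have "distinct vs" using that P_def is_path_def by auto
    then have "length vs = card (set vs)" by (simp add: distinct_card)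
    also have "\<dots> \<le> card ?U" using PU[OF that] finU by (simp add: card_mono)
    finally show ?thesis .
  qed
  have finP: "finite P"
    by (rule finite_subset[OF _ finite_lists_length_le[OF finU, of "card ?U"]]) (use PU PL in auto)
  obtain e where e: "e \<in> F" using ne by auto
  then obtain a b where ab: "e = {a, b}" "a \<noteq> b" using two by (metis card_2_iff)
  have "[a, b] \<in> P" using ab e unfolding P_def is_path_def by (auto simp: less_Suc_eq)
  then have Pne: "P \<noteq> {}" by auto
  define m where "m = Max (length ` P)"
  have "m \<in> length ` P" unfolding m_def using finP Pne by auto
  then obtain vs where vs: "vs \<in> P" "length vs = m" by auto
  have mx: "length ws \<le> m" if "ws \<in> P" for ws unfolding m_def using finP that by auto
  have p: "is_path F vs" using vs P_def by auto
  have l2: "length vs \<ge> 2" and dv: "distinct vs" using p is_path_def by auto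
  have e01: "{vs!0, vs!1} \<in> F" using p l2 unfolding is_path_def by auto
  have "\<forall>e\<in>F. vs!0 \<in> e \<longrightarrow> e = {vs!0, vs!1}"
  proof (intro ballI impI)
    fix e assume eF: "e \<in> F" and v0: "vs!0 \<in> e"
    obtain x y where xy: "e = {x, y}" "x \<noteq> y" using two eF by (metis card_2_iff)
    obtain w where w: "e = {vs!0, w}" "w \<noteq> vs!0" using xy v0 by auto
    show "e = {vs!0, vs!1}"
    proof (cases "w \<in> set vs")
      case False
      have "{w, vs!0} \<in> F" using w eF by (simp add: insert_commute)
      then have "is_path F (w # vs)" using path_extend[OF p False] by auto
      then have "w # vs \<in> P" unfolding P_def by auto
      then show ?thesis using mx vs by fastforce
    next
      case True
      then obtain j where j: "j < length vs" "vs!j = w" by (auto simp: in_set_conv_nth)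
      have "j \<noteq> 0" using j(2) w(2) by metis
      show ?thesis
      proof (cases "j = 1")
        case True then show ?thesis using w j by auto
      next
        case False
        then have "2 \<le> j" using \<open>j \<noteq> 0\<close> by auto
        moreover have "{vs!j, vs!0} \<in> F" using w eF j by (simp add: insert_commute)
        ultimately have "is_cycle_in F (take (Suc j) vs)" using path_cycle[OF p] j by auto
        then show ?thesis using fo unfolding is_forest_def by blast
      qed
    qed
  qed
  then show ?thesis using e01 by blast
qed

lemma forest_tail:
  "finite F \<Longrightarrow> \<forall>e\<in>F. card e = 2 \<Longrightarrow> is_forest F \<Longrightarrow> \<exists>t. (\<forall>e\<in>F. t e \<in> e) \<and> inj_on t F"
proof (induction "card F" arbitrary: F)
  case 0
  then show ?case by auto
next
  case (Suc n)
  then have ne: "F \<noteq> {}" by auto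
  obtain a b where ab: "{a, b} \<in> F" "\<forall>e\<in>F. a \<in> e \<longrightarrow> e = {a, b}"
    using leaf_exists[OF Suc.prems ne] by blast
  define F' where "F' = F - {{a, b}}"
  have "card F' = card F - 1" unfolding F'_def by (rule card_Diff_singleton[OF ab(1)])
  then have cF: "n = card F'" using Suc.hyps(2) by simp
  have fF: "finite F'" unfolding F'_def using Suc.prems(1) by simp
  have tF: "\<forall>e\<in>F'. card e = 2" unfolding F'_def using Suc.prems(2) by simp
  have "is_forest F'" using forest_mono[OF Suc.prems(3)] unfolding F'_def by blast
  then obtain t where t: "\<forall>e\<in>F'. t e \<in> e" "inj_on t F'"
    using Suc.hyps(1)[OF cF fF tF] by blast
  have na: "t e \<noteq> a" if eF: "e \<in> F'" for e
  proof
    assume tea: "t e = a"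
    have "e \<in> F" "e \<noteq> {a, b}" using eF unfolding F'_def by simp_all
    moreover have "a \<in> e" using t(1) eF tea by blast
    ultimately show False using ab(2) by blast
  qed
  define t' where "t' = t({a, b} := a)"
  have "\<forall>e\<in>F. t' e \<in> e"
  proof
    fix e assume "e \<in> F"
    show "t' e \<in> e"
    proof (cases "e = {a, b}")
      case True then show ?thesis unfolding t'_def by simp
    next
      case False
      then have "e \<in> F'" unfolding F'_def using \<open>e \<in> F\<close> by simp
      then show ?thesis unfolding t'_def using False t(1) by simp
    qed
  qed
  moreover have "inj_on t' F"
  proof (rule inj_onI)
    fix x y assume xF: "x \<in> F" and yF: "y \<in> F" and eq: "t' x = t' y"
    show "x = y"
    proof (cases "x = {a, b}"; cases "y = {a, b}")
      assume "x = {a, b}" "y = {a, b}" then show ?thesis by simp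
    next
      assume x: "x = {a, b}" and y: "y \<noteq> {a, b}"
      then have "y \<in> F'" unfolding F'_def using yF by simp
      moreover have "t y = a" using eq x y unfolding t'_def by simp
      ultimately show ?thesis using na by blast
    next
      assume x: "x \<noteq> {a, b}" and y: "y = {a, b}"
      then have "x \<in> F'" unfolding F'_def using xF by simp
      moreover have "t x = a" using eq x y unfolding t'_def by simp
      ultimately show ?thesis using na by blast
    next
      assume x: "x \<noteq> {a, b}" and y: "y \<noteq> {a, b}"
      then have "x \<in> F'" "y \<in> F'" unfolding F'_def using xF yF by simp_all
      moreover have "t x = t y" using eq x y unfolding t'_def by simp
      ultimately show ?thesis using inj_onD[OF t(2)] by blast
    qed
  qed
  ultimately show ?case by blast
qed

lemma arb_part:
  assumes "finite_graph V E" "arboricity E \<le> k"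
  shows "forest_partitionable E k"
proof -
  have finE: "finite E" using assms(1) unfolding finite_graph_def
    by (meson Pow_iff finite_Pow_iff finite_subset subsetI)
  obtain g where g: "bij_betw g E {0..<card E}" using ex_bij_betw_finite_nat[OF finE] by blast
  have "forest_partitionable E (card E)"
    unfolding forest_partitionable_def
  proof (intro exI[of _ g] conjI allI impI ballI)
    fix e assume "e \<in> E" then show "g e < card E" using g bij_betwE by fastforce
  next
    fix i assume "i < card E"
    show "is_forest {e \<in> E. g e = i}"
    proof (cases "{e \<in> E. g e = i} = {}")
      case True then show ?thesis using forest_single[of "{}" undefined] by (metis empty_subsetI)
    next
      case False
      then obtain e where e: "e \<in> E" "g e = i" by auto
      have "{e \<in> E. g e = i} \<subseteq> {e}" using g e unfolding bij_betw_def inj_on_def by auto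
      then show ?thesis by (rule forest_single)
    qed
  qed
  then have "forest_partitionable E (arboricity E)" unfolding arboricity_def by (rule LeastI)
  then obtain f where f: "\<forall>e\<in>E. f e < arboricity E" "\<forall>i<arboricity E. is_forest {e\<in>E. f e = i}"
    unfolding forest_partitionable_def by blast
  show ?thesis unfolding forest_partitionable_def
  proof (intro exI[of _ f] conjI allI impI ballI)
    fix e assume "e \<in> E" then show "f e < k" using f assms(2) by fastforce
  next
    fix i assume "i < k"
    show "is_forest {e \<in> E. f e = i}"
    proof (cases "i < arboricity E")
      case True then show ?thesis using f by auto
    next
      case False
      then have "{e \<in> E. f e = i} = {}" using f by fastforce
      then show ?thesis using forest_single[of "{}" undefined] by (metis empty_subsetI)
    qed
  qed
qed

lemma tails:
  assumes "finite_graph V E" "arboricity E \<le> k"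
  shows "\<exists>tail. (\<forall>e\<in>E. tail e \<in> e) \<and> (\<forall>v. finite {e\<in>E. tail e = v} \<and> card {e\<in>E. tail e = v} \<le> k)"
proof -
  have finE: "finite E" using assms(1) unfolding finite_graph_def
    by (meson Pow_iff finite_Pow_iff finite_subset subsetI)
  have two: "\<forall>e\<in>E. card e = 2" using assms(1) unfolding finite_graph_def by auto
  obtain f where f: "\<forall>e\<in>E. f e < k" "\<forall>i<k. is_forest {e\<in>E. f e = i}"
    using arb_part[OF assms] unfolding forest_partitionable_def by blast
  have "\<forall>i. \<exists>t. i < k \<longrightarrow> (\<forall>e\<in>{e\<in>E. f e = i}. t e \<in> e) \<and> inj_on t {e\<in>E. f e = i}"
  proof
    fix i
    show "\<exists>t. i < k \<longrightarrow> (\<forall>e\<in>{e\<in>E. f e = i}. t e \<in> e) \<and> inj_on t {e\<in>E. f e = i}"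
    proof (cases "i < k")
      case True
      have "finite {e\<in>E. f e = i}" using finE by simp
      moreover have "\<forall>e\<in>{e\<in>E. f e = i}. card e = 2" using two by simp
      moreover have "is_forest {e\<in>E. f e = i}" using f(2) True by simp
      ultimately obtain t where "(\<forall>e\<in>{e\<in>E. f e = i}. t e \<in> e) \<and> inj_on t {e\<in>E. f e = i}"
        using forest_tail by blast
      then show ?thesis by (intro exI[of _ t] impI)
    next
      case False
      then show ?thesis by simp
    qed
  qed
  from choice[OF this] obtain T where
    T: "\<forall>i. i < k \<longrightarrow> (\<forall>e\<in>{e\<in>E. f e = i}. T i e \<in> e) \<and> inj_on (T i) {e\<in>E. f e = i}"
    by blast
  define tail where "tail e = T (f e) e" for e
  have tin: "\<forall>e\<in>E. tail e \<in> e"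
  proof
    fix e assume e: "e \<in> E"
    then have fk: "f e < k" using f(1) by blast
    have TT: "(\<forall>e'\<in>{e'\<in>E. f e' = f e}. T (f e) e' \<in> e') \<and> inj_on (T (f e)) {e'\<in>E. f e' = f e}"
      using mp[OF spec[OF T, of "f e"] fk] .
    have em: "e \<in> {e'\<in>E. f e' = f e}" using e by simp
    have "T (f e) e \<in> e" using bspec[OF conjunct1[OF TT] em] .
    then show "tail e \<in> e" unfolding tail_def .
  qed
  have tc: "finite {e\<in>E. tail e = v} \<and> card {e\<in>E. tail e = v} \<le> k" for v
  proof
    show "finite {e\<in>E. tail e = v}" using finE by simp
    have inj: "inj_on f {e\<in>E. tail e = v}"
    proof (rule inj_onI)
      fix x y assume x: "x \<in> {e\<in>E. tail e = v}" and y: "y \<in> {e\<in>E. tail e = v}" and fxy: "f x = f y"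
      have "f x < k" using x f(1) by blast
      then have ij: "inj_on (T (f x)) {e\<in>E. f e = f x}" using conjunct2[OF mp[OF spec[OF T, of "f x"]]] by blast
      have "T (f x) x = v" using x unfolding tail_def by simp
      moreover have "T (f x) y = v" using y fxy unfolding tail_def by simp
      ultimately have eq: "T (f x) x = T (f x) y" by simp
      have xm: "x \<in> {e\<in>E. f e = f x}" using x by simp
      have ym: "y \<in> {e\<in>E. f e = f x}" using y fxy by simp
      show "x = y" by (rule inj_onD[OF ij eq xm ym])
    qed
    have sub: "f ` {e\<in>E. tail e = v} \<subseteq> {..<k}" using f(1) by auto
    have "card {e\<in>E. tail e = v} \<le> card {..<k::nat}"
      by (rule card_inj_on_le[OF inj sub finite_lessThan])
    then show "card {e\<in>E. tail e = v} \<le> k" by simp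
  qed
  have "(\<forall>e\<in>E. tail e \<in> e) \<and> (\<forall>v. finite {e\<in>E. tail e = v} \<and> card {e\<in>E. tail e = v} \<le> k)"
  proof (rule conjI)
    show "\<forall>e\<in>E. tail e \<in> e" by (rule tin)
    show "\<forall>v. finite {e\<in>E. tail e = v} \<and> card {e\<in>E. tail e = v} \<le> k"
      using tc by (rule allI)
  qed
  then show ?thesis by (rule exI[of _ tail])
qed

lemma adapt:
  assumes g: "finite_graph V E" and tail: "\<forall>e\<in>E. tail e \<in> e" "\<forall>v. finite {e\<in>E. tail e = v} \<and> card {e\<in>E. tail e = v} \<le> k"
  shows "adaptably_choosable V E (k + 1)"
  unfolding adaptably_choosable_def
proof (intro allI impI)
  fix F :: "'a set \<Rightarrow> int" and L :: "'a \<Rightarrow> int set"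
  assume L: "\<forall>v\<in>V. at_least (k + 1) (L v)"
  define B where "B v = F ` {e\<in>E. tail e = v}" for v
  have tv: "finite {e\<in>E. tail e = v} \<and> card {e\<in>E. tail e = v} \<le> k" for v
    using tail(2) by (rule spec)
  have finB: "finite (B v)" for v
    unfolding B_def by (rule finite_imageI[OF conjunct1[OF tv]])
  have cB: "card (B v) \<le> k" for v
    unfolding B_def using card_image_le[OF conjunct1[OF tv], of F] conjunct2[OF tv, of v]
    by (rule le_trans)
  define c where "c v = (SOME z. z \<in> L v - B v)" for v
  have ne: "L v - B v \<noteq> {}" if vV: "v \<in> V" for v
  proof
    assume "L v - B v = {}"
    then have sub: "L v \<subseteq> B v" by (simp only: Diff_eq_empty_iff)
    then have finL: "finite (L v)" using finB by (rule finite_subset)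
    have "at_least (k + 1) (L v)" using L vV by simp
    then have "k + 1 \<le> card (L v)" using finL unfolding at_least_def by simp
    moreover have "card (L v) \<le> card (B v)" using card_mono[OF finB sub] .
    ultimately show False using cB[of v] by simp
  qed
  have cv: "c v \<in> L v - B v" if "v \<in> V" for v
    unfolding c_def some_in_eq by (rule ne[OF that])
  show "\<exists>c. (\<forall>v\<in>V. c v \<in> L v) \<and> adapted E F c"
  proof (intro exI[of _ c] conjI ballI)
    fix v assume "v \<in> V" then show "c v \<in> L v" using cv by auto
  next
    show "adapted E F c" unfolding adapted_def
    proof (intro allI impI notI)
      fix u v assume e: "{u, v} \<in> E" and eq: "c u = c v \<and> c v = F {u, v}"
      have uv: "u \<in> V" "v \<in> V" using e g unfolding finite_graph_def by auto
      have "tail {u, v} \<in> {u, v}" using tail e by auto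
      then show False
      proof
        assume "tail {u, v} = u"
        then have "F {u, v} \<in> B u" using e unfolding B_def by auto
        then show False using cv[OF uv(1)] eq by auto
      next
        assume "tail {u, v} \<in> {v}"
        then have "F {u, v} \<in> B v" using e unfolding B_def by auto
        then show False using cv[OF uv(2)] eq by auto
      qed
    qed
  qed
qed

lemma kd:
  assumes a: "adaptably_choosable V E m" and g: "finite_graph V E"
  shows "kd_choosable V E m 1"
  unfolding kd_choosable_def
proof (intro allI impI)
  fix L :: "'a \<Rightarrow> int set" assume L: "kd_list_assignment V E m 1 L"
  define F where "F e = (SOME z. z \<in> (\<Inter>x\<in>e. L x))" for e
  obtain c where c: "\<forall>v\<in>V. c v \<in> L v" "adapted E F c"
    using a L unfolding adaptably_choosable_def kd_list_assignment_def by blast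
  show "\<exists>\<phi>. (\<forall>v\<in>V. \<phi> v \<in> L v) \<and> (\<forall>u v. {u, v} \<in> E \<longrightarrow> \<phi> u \<noteq> \<phi> v)"
  proof (intro exI[of _ c] conjI allI impI)
    show "\<forall>v\<in>V. c v \<in> L v" using c by auto
  next
    fix u v assume e: "{u, v} \<in> E"
    show "c u \<noteq> c v"
    proof
      assume eq: "c u = c v"
      have fin: "finite (L u \<inter> L v)" and cd: "card (L u \<inter> L v) \<le> 1"
        using L e unfolding kd_list_assignment_def by auto
      have "{u, v} \<subseteq> V" using g e unfolding finite_graph_def by auto
      then have mem: "c v \<in> L u \<inter> L v" using c eq by auto
      have all: "\<forall>a\<in>L u \<inter> L v. \<forall>b\<in>L u \<inter> L v. a = b"
        using card_le_Suc0_iff_eq[OF fin] cd by simp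
      then have "L u \<inter> L v = {c v}" using mem by blast
      then have "F {u, v} = c v" unfolding F_def by auto
      moreover have "\<not> (c u = c v \<and> c v = F {u, v})" using c(2) e unfolding adapted_def by blast
      ultimately show False using eq by simp
    qed
  qed
qed

theorem proposition1:
  fixes V :: "'a set" and E :: "'a set set" and k :: nat
  assumes "finite_graph V E"
    and "arboricity E \<le> k"
  shows "adaptably_choosable V E (k + 1) \<and> kd_choosable V E (k + 1) 1"
proof -
  obtain tt where t1: "\<forall>e\<in>E. tt e \<in> e"
    and t2: "\<forall>v. finite {e\<in>E. tt e = v} \<and> card {e\<in>E. tt e = v} \<le> k"
    using tails[OF assms] by blast
  have a: "adaptably_choosable V E (k + 1)" by (rule adapt[OF assms(1) t1 t2])
  show ?thesis using a kd[OF a assms(1)] by (rule conjI)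
qed

end
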